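(* For all homogeneous $\varphi_1,\varphi_2,\psi\in CC^\bullet(\mathscr A)[1]$, as operators on $CC_\bullet(\mathscr A)[1]$: $\rho_{\varphi_1\circ\varphi_2,\psi}-\rho_{\varphi_1,[\varphi_2,\psi]}+(-1)^{|\varphi_1|'|\varphi_2|'}[\mathcal L_{\varphi_2},\rho_{\varphi_1,\psi}]=T_{\varphi_1,\varphi_2,\psi}+(-1)^{|\varphi_1|'|\varphi_2|'}T_{\varphi_2,\varphi_1,\psi}$, where $T_{\alpha,\beta,\psi}:=\mathcal L^{0}_{\alpha}\circ\rho_{\beta,\psi}$ and $\mathcal L^{0}_\alpha(\mathbb X):=\sum_{0\le i\le j\le k}(-1)^{(|x_0|'+\cdots+|x_j|')(|x_{j+1}|'+\cdots+|x_k|')}\alpha(x_{j+1},\dots,x_k,x_0,\dots,x_i)\otimes x_{i+1}\otimes\cdots\otimes x_j$ is the second summand of $\mathcal L_\alpha$ (i.e. $T_{\alpha,\beta,\psi}$ is the operation $\{\alpha\{\beta\{\psi,\mathit{in}\}\}\}$: apply $\rho_{\beta,\psi}$, then feed the resulting first tensor factor together with neighbouring inputs cyclically into $\alpha$).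
   Context: Same notation as for Hochschild operations: $\mathscr A$ with graded $R$-modules $\mathrm{Hom}_{\mathscr A}(X,Y)$; $CC^\bullet(\mathscr A)[1]$ and $CC_\bullet(\mathscr A)[1]$ as usual, chains $\mathbb X=x_0\otimes\cdots\otimes x_k$ with $x_i$ in shifted Homs of shifted degree $|x_i|'$, and $|\varphi|'$ the degree of a cochain in $CC^\bullet(\mathscr A)[1]$. $(\varphi\circ\psi)(x_1,\dots,x_k)=\sum_{i\le j}(-1)^{|\psi|'(|x_1|'+\cdots+|x_i|')}\varphi(x_1,\dots,x_i,\psi(x_{i+1},\dots,x_j),\dots,x_k)$; $[\varphi,\psi]=\varphi\circ\psi-(-1)^{|\varphi|'|\psi|'}\psi\circ\varphi$; $\mathcal L_\varphi(\mathbb X)=\sum_{i\le j}(-1)^{|\varphi|'(|x_0|'+\cdots+|x_i|')}x_0\otimes\cdots\otimes x_i\otimes\varphi(x_{i+1},\dots,x_j)\otimes\cdots\otimes x_k+\mathcal L^0_\varphi(\mathbb X)$; $\rho_{\varphi,\psi}(\mathbb X)=\sum_{i\le j\le s\le t}(-1)^{|\psi|'(|x_{j+1}|'+\cdots+|x_s|')+(|x_0|'+\cdots+|x_j|')(|x_{j+1}|'+\cdots+|x_k|')}\varphi(x_{j+1},\dots,x_s,\psi(x_{s+1},\dots,x_t),x_{t+1},\dots,x_k,x_0,\dots,x_i)\otimes x_{i+1}\otimes\cdots\otimes x_j$. Graded commutators of operators use degrees $|\mathcal L_\varphi|=|\varphi|'$ and $|\rho_{\varphi,\psi}|=|\varphi|'+|\psi|'$.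 No reducedness assumption on the cochains is needed. *)

theory Defs
  imports Main
begin

text \<open>A homogeneous element of a shifted Hom module: (shifted degree, value).
  A cochain in CC(A)[1]: (shifted degree, function on tuples of homogeneous elements).
  Operators on chains are represented in transposed form: an operator P is given by
  P t X = t(P(X)) for every multilinear t on elementary tensors X = x_0 (x) ... (x) x_k
  (extended additively over the formal sum P(X)), so composition P o Q is
  Q applied to (P t).\<close>

type_synonym 'm hel = "int \<times> 'm"
type_synonym 'm coch = "int \<times> ('m hel list \<Rightarrow> 'm)"
type_synonym ('m, 'c) chop = "('m hel list \<Rightarrow> 'c) \<Rightarrow> 'm hel list \<Rightarrow> 'c"

definition sg :: "int \<Rightarrow> 'a::ab_group_add \<Rightarrow> 'a" where
  "sg n a = (if even n then a else - a)"

definition degs :: "'m hel list \<Rightarrow> int" where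
  "degs xs = sum_list (map fst xs)"

definition seg :: "nat \<Rightarrow> nat \<Rightarrow> 'a list \<Rightarrow> 'a list" where
  "seg a b xs = drop a (take b xs)"

text \<open>additivity in each tensor slot (R-multilinearity implies this)\<close>
definition multilin :: "('m::ab_group_add hel list \<Rightarrow> 'c::ab_group_add) \<Rightarrow> bool" where
  "multilin f \<longleftrightarrow> (\<forall>xs ys d a b. f (xs @ (d, a + b) # ys) = f (xs @ (d, a) # ys) + f (xs @ (d, b) # ys))"

definition app :: "'m coch \<Rightarrow> 'm hel list \<Rightarrow> 'm hel" where
  "app \<phi> xs = (fst \<phi> + degs xs, snd \<phi> xs)"

text \<open>Gerstenhaber circle product: x_1..x_k is the list xs, indices 0 \<le> i \<le> j \<le> k\<close>
definition gcomp :: "'m::ab_group_add coch \<Rightarrow> 'm coch \<Rightarrow> 'm coch" where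
  "gcomp \<phi> \<psi> = (fst \<phi> + fst \<psi>, \<lambda>xs.
     \<Sum>j\<le>length xs. \<Sum>i\<le>j. sg (fst \<psi> * degs (take i xs))
        (snd \<phi> (take i xs @ [app \<psi> (seg i j xs)] @ drop j xs)))"

definition gbr :: "'m::ab_group_add coch \<Rightarrow> 'm coch \<Rightarrow> 'm coch" where
  "gbr \<phi> \<psi> = (fst \<phi> + fst \<psi>, \<lambda>xs.
     snd (gcomp \<phi> \<psi>) xs - sg (fst \<phi> * fst \<psi>) (snd (gcomp \<psi> \<phi>) xs))"

text \<open>Chains X = x_0..x_k are lists; x_0..x_i = take (i+1) X, x_{i+1}..x_j = seg (i+1) (j+1) X.\<close>

definition L0 :: "'m::ab_group_add coch \<Rightarrow> ('m, 'c::ab_group_add) chop" where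
  "L0 \<alpha> t X = (\<Sum>j<length X. \<Sum>i\<le>j.
     sg (degs (take (j+1) X) * degs (drop (j+1) X))
       (t (app \<alpha> (drop (j+1) X @ take (i+1) X) # seg (i+1) (j+1) X)))"

definition Lie :: "'m::ab_group_add coch \<Rightarrow> ('m, 'c::ab_group_add) chop" where
  "Lie \<phi> t X = (\<Sum>j<length X. \<Sum>i\<le>j.
     sg (fst \<phi> * degs (take (i+1) X))
       (t (take (i+1) X @ [app \<phi> (seg (i+1) (j+1) X)] @ drop (j+1) X))) + L0 \<phi> t X"

definition rho :: "'m::ab_group_add coch \<Rightarrow> 'm coch \<Rightarrow> ('m, 'c::ab_group_add) chop" where
  "rho \<phi> \<psi> t X = (\<Sum>q<length X. \<Sum>s\<le>q. \<Sum>j\<le>s. \<Sum>i\<le>j.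
     sg (fst \<psi> * degs (seg (j+1) (s+1) X) + degs (take (j+1) X) * degs (drop (j+1) X))
       (t (app \<phi> (seg (j+1) (s+1) X @ [app \<psi> (seg (s+1) (q+1) X)] @ drop (q+1) X @ take (i+1) X)
           # seg (i+1) (j+1) X)))"

text \<open>composition of operators P o Q (apply Q first), in transposed form\<close>
definition ocomp :: "('m, 'c) chop \<Rightarrow> ('m, 'c) chop \<Rightarrow> ('m, 'c) chop" where
  "ocomp P Q t = Q (P t)"

definition ocomm :: "int \<Rightarrow> int \<Rightarrow> ('m, 'c::ab_group_add) chop \<Rightarrow> ('m, 'c) chop \<Rightarrow> ('m, 'c) chop" where
  "ocomm dP dQ P Q t X = ocomp P Q t X - sg (dP * dQ) (ocomp Q P t X)"

definition Top :: "'m::ab_group_add coch \<Rightarrow> 'm coch \<Rightarrow> 'm coch \<Rightarrow> ('m, 'c::ab_group_add) chop" where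
  "Top \<alpha> \<beta> \<psi> = ocomp (L0 \<alpha>) (rho \<beta> \<psi>)"

end

theory Submission
  imports Defs
begin


definition sp :: "'a list \<Rightarrow> ('a list \<Rightarrow> 'a list \<Rightarrow> 'b::comm_monoid_add) \<Rightarrow> 'b" where
  "sp X F = (\<Sum>i\<le>length X. F (take i X) (drop i X))"
definition spn :: "'a list \<Rightarrow> ('a list \<Rightarrow> 'a list \<Rightarrow> 'b::comm_monoid_add) \<Rightarrow> 'b" where
  "spn X F = sp X (\<lambda>a b. if a = [] then 0 else F a b)"

lemma sp_Nil[simp]: "sp [] F = F [] []" by (simp add: sp_def)
lemma sp_Cons: "sp (x#xs) F = F [] (x#xs) + sp xs (\<lambda>a b. F (x#a) b)"
  unfolding sp_def by (simp add: sum.atMost_Suc_shift del: sum.atMost_Suc)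
lemma spn_Nil[simp]: "spn [] F = 0" by (simp add: spn_def)
lemma spn_Cons[simp]: "spn (x#xs) F = sp xs (\<lambda>a b. F (x#a) b)"
  by (simp add: spn_def sp_Cons)
lemma sp_add: "sp X (\<lambda>a b. F a b + G a b) = sp X F + sp X G"
  by (simp add: sp_def sum.distrib)
lemma sp_0[simp]: "sp X (\<lambda>a b. 0) = 0" by (simp add: sp_def)
lemma sp_split: "sp X F = F [] X + spn X F"
  by (cases X) (simp_all add: sp_Cons)
lemma sp_append: "sp (xs @ ys) F = sp xs (\<lambda>a r. F a (r @ ys)) + spn ys (\<lambda>a r. F (xs @ a) r)"
proof (induction xs arbitrary: F)
  case Nil show ?case by (simp add: sp_split[of ys])
next
  case (Cons x xs) show ?case by (simp add: sp_Cons Cons add.assoc)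
qed
lemma sp_assoc: "sp X (\<lambda>l c. sp l (\<lambda>a b. F a b c)) = sp X (\<lambda>a r. sp r (\<lambda>b c. F a b c))"
proof (induction X arbitrary: F)
  case Nil show ?case by simp
next
  case (Cons x xs)
  show ?case
    by (simp add: sp_Cons sp_add Cons[of "\<lambda>a b c. F (x#a) b c"] add.assoc)
qed
lemma sp_swap: "sp A (\<lambda>x y. sp B (\<lambda>u v. G x y u v)) = sp B (\<lambda>u v. sp A (\<lambda>x y. G x y u v))"
  unfolding sp_def by (rule sum.swap)
lemma sp_cong: "(\<And>a b. X = a @ b \<Longrightarrow> F a b = G a b) \<Longrightarrow> sp X F = sp X G"
  unfolding sp_def by (rule sum.cong) auto
lemma spn_append: "spn (xs @ ys) F = spn xs (\<lambda>a r. F a (r @ ys)) + spn ys (\<lambda>a r. F (xs @ a) r)"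
  unfolding spn_def sp_append by (rule arg_cong2[where f="(+)"]; rule sp_cong; simp)

fun spL :: "nat \<Rightarrow> 'a list \<Rightarrow> ('a list list \<Rightarrow> 'b::comm_monoid_add) \<Rightarrow> 'b" where
  "spL 0 X F = 0"
| "spL (Suc 0) X F = F [X]"
| "spL (Suc (Suc k)) X F = sp X (\<lambda>a r. spL (Suc k) r (\<lambda>ps. F (a # ps)))"

lemma spL_zero[simp]: "spL m A (\<lambda>ps. 0) = 0"
proof (induction m arbitrary: A)
  case (Suc m) then show ?case by (cases m) simp_all
qed simp

lemma spL_swap_sp_Suc: "spL (Suc k) A (\<lambda>ps. sp B (\<lambda>u v. G ps u v)) = sp B (\<lambda>u v. spL (Suc k) A (\<lambda>ps. G ps u v))"
proof (induction k arbitrary: A G)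
  case 0 show ?case by simp
next
  case (Suc k)
  show ?case by (simp add: Suc sp_swap[of A B])
qed
lemma spL_swap_sp: "spL m A (\<lambda>ps. sp B (\<lambda>u v. G ps u v)) = sp B (\<lambda>u v. spL m A (\<lambda>ps. G ps u v))"
  by (cases m) (simp_all add: spL_swap_sp_Suc)

lemma spL_swap_Suc: "spL m A (\<lambda>ps. spL (Suc j) B (\<lambda>qs. G ps qs)) = spL (Suc j) B (\<lambda>qs. spL m A (\<lambda>ps. G ps qs))"
proof (induction j arbitrary: B G)
  case 0 show ?case by simp
next
  case (Suc j)
  show ?case by (simp add: Suc spL_swap_sp)
qed
lemma spL_swap: "spL m A (\<lambda>ps. spL j B (\<lambda>qs. G ps qs)) = spL j B (\<lambda>qs. spL m A (\<lambda>ps. G ps qs))"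
proof (cases j)
  case 0 then show ?thesis by (cases m) (simp_all add: sp_def spL_swap_sp_Suc)
qed (simp add: spL_swap_Suc)

lemma spL_head: "sp X (\<lambda>a r. spL (Suc j) a (\<lambda>qs. spL (Suc m) r (\<lambda>ps. F (qs @ ps)))) = spL (Suc j + Suc m) X F"
proof (induction j arbitrary: X F)
  case 0 show ?case by simp
next
  case (Suc j)
  have "sp X (\<lambda>a r. spL (Suc (Suc j)) a (\<lambda>qs. spL (Suc m) r (\<lambda>ps. F (qs @ ps))))
     = sp X (\<lambda>a r. sp a (\<lambda>a1 r1. spL (Suc j) r1 (\<lambda>qs. spL (Suc m) r (\<lambda>ps. F (a1 # qs @ ps)))))"
    by simp
  also have "\<dots> = sp X (\<lambda>a1 r'. sp r' (\<lambda>r1 r. spL (Suc j) r1 (\<lambda>qs. spL (Suc m) r (\<lambda>ps. F (a1 # qs @ ps)))))"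
    by (rule sp_assoc)
  also have "\<dots> = sp X (\<lambda>a1 r'. spL (Suc j + Suc m) r' (\<lambda>ps. F (a1 # ps)))"
    by (rule sp_cong, rule Suc.IH)
  also have "\<dots> = spL (Suc (Suc j) + Suc m) X F" by simp
  finally show ?case .
qed

lemma spL_refine: "k < m \<Longrightarrow> spL m X (\<lambda>ps. spL (Suc j) (ps!k) (\<lambda>qs. F (take k ps @ qs @ drop (Suc k) ps))) = spL (m + j) X F"
proof (induction k arbitrary: m X F)
  case 0
  then obtain m' where m: "m = Suc m'" by (cases m) auto
  show ?case
  proof (cases m')
    case 0 then show ?thesis using m by simp
  next
    case (Suc m'')
    have "spL m X (\<lambda>ps. spL (Suc j) (ps!0) (\<lambda>qs. F (take 0 ps @ qs @ drop (Suc 0) ps)))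
       = sp X (\<lambda>a r. spL (Suc m'') r (\<lambda>ps. spL (Suc j) a (\<lambda>qs. F (qs @ ps))))"
      using m Suc by simp
    also have "\<dots> = sp X (\<lambda>a r. spL (Suc j) a (\<lambda>qs. spL (Suc m'') r (\<lambda>ps. F (qs @ ps))))"
      by (rule sp_cong, rule spL_swap)
    also have "\<dots> = spL (m + j) X F" using m Suc spL_head[of X j m'' F] by (simp add: add.commute)
    finally show ?thesis .
  qed
next
  case (Suc k)
  then obtain m' where m: "m = Suc (Suc m')" by (cases m; cases "m - 1") auto
  have "spL m X (\<lambda>ps. spL (Suc j) (ps!Suc k) (\<lambda>qs. F (take (Suc k) ps @ qs @ drop (Suc (Suc k)) ps)))
     = sp X (\<lambda>a r. spL (Suc m') r (\<lambda>ps. spL (Suc j) (ps!k) (\<lambda>qs. F (a # (take k ps @ qs @ drop (Suc k) ps)))))"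
    using m by simp
  also have "\<dots> = sp X (\<lambda>a r. spL (Suc m' + j) r (\<lambda>ps. F (a # ps)))"
    using Suc.prems m by (intro sp_cong Suc.IH) simp
  also have "\<dots> = spL (m + j) X F" using m by simp
  finally show ?case .
qed



lemma degs_append[simp]: "degs (xs @ ys) = degs xs + degs ys" by (simp add: degs_def)
lemma degs_Cons[simp]: "degs (x # xs) = fst x + degs xs" by (simp add: degs_def)
lemma degs_Nil[simp]: "degs [] = 0" by (simp add: degs_def)

lemma spn_sum: "spn X F = (\<Sum>j<length X. F (take (Suc j) X) (drop (Suc j) X))"
proof (cases X)
  case (Cons x xs)
  show ?thesis unfolding Cons spn_Cons sp_def
    by (simp add: lessThan_Suc_atMost[symmetric])
qed simp

lemma spn_nest: "spn X (\<lambda>l c. spn l (F c)) = sp X (\<lambda>l c. spn l (F c))"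
  by (simp add: sp_split[of X "\<lambda>l c. spn l (F c)"])

lemma spn_sp: "spn X F = sp X (\<lambda>a b. if a = [] then 0 else F a b)" by (simp add: spn_def)

definition Lf :: "'m::ab_group_add coch \<Rightarrow> ('m, 'c::ab_group_add) chop" where
  "Lf \<phi> t X = (\<Sum>j<length X. \<Sum>i\<le>j.
     sg (fst \<phi> * degs (take (i+1) X))
       (t (take (i+1) X @ [app \<phi> (seg (i+1) (j+1) X)] @ drop (j+1) X)))"

lemma Lie_Lf: "Lie \<phi> t X = Lf \<phi> t X + L0 \<phi> t X" by (simp add: Lie_def Lf_def)

lemma take_take_le: "i \<le> j \<Longrightarrow> take i (take j X) = take i X" by (simp add: min_def)

lemma gcomp_sp: "snd (gcomp \<phi> \<psi>) xs = sp xs (\<lambda>u r. sp r (\<lambda>v w. sg (fst \<psi> * degs u) (snd \<phi> (u @ [app \<psi> v] @ w))))"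
proof -
  have "sp xs (\<lambda>u r. sp r (\<lambda>v w. sg (fst \<psi> * degs u) (snd \<phi> (u @ [app \<psi> v] @ w))))
      = sp xs (\<lambda>l w. sp l (\<lambda>u v. sg (fst \<psi> * degs u) (snd \<phi> (u @ [app \<psi> v] @ w))))"
    by (rule sp_assoc[symmetric])
  also have "\<dots> = snd (gcomp \<phi> \<psi>) xs"
    unfolding gcomp_def sp_def seg_def
    by (auto intro!: sum.cong simp: min_def)
  finally show ?thesis by simp
qed

lemma L0_sp: "L0 \<alpha> t X = sp X (\<lambda>a r. sp r (\<lambda>e d. if a = [] then 0 else sg (degs (a@e) * degs d) (t (app \<alpha> (d@a) # e))))"
proof -
  have "sp X (\<lambda>a r. sp r (\<lambda>e d. if a = [] then 0 else sg (degs (a@e) * degs d) (t (app \<alpha> (d@a) # e))))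
      = sp X (\<lambda>l d. spn l (\<lambda>a e. sg (degs (a@e) * degs d) (t (app \<alpha> (d@a) # e))))"
    unfolding spn_sp by (rule sp_assoc[symmetric])
  also have "\<dots> = spn X (\<lambda>l d. spn l (\<lambda>a e. sg (degs (a@e) * degs d) (t (app \<alpha> (d@a) # e))))"
    by (rule spn_nest[symmetric])
  also have "\<dots> = L0 \<alpha> t X"
    unfolding L0_def spn_sum[of X]
  proof (rule sum.cong[OF refl])
    fix j assume j: "j \<in> {..<length X}"
    then have len: "length (take (Suc j) X) = Suc j" by simp
    show "spn (take (Suc j) X) (\<lambda>a e. sg (degs (a @ e) * degs (drop (Suc j) X)) (t (app \<alpha> (drop (Suc j) X @ a) # e)))
      = (\<Sum>i\<le>j. sg (degs (take (j + 1) X) * degs (drop (j + 1) X))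
              (t (app \<alpha> (drop (j + 1) X @ take (i + 1) X) # seg (i + 1) (j + 1) X)))"
      unfolding spn_sum len append_take_drop_id lessThan_Suc_atMost seg_def
      by (rule sum.cong[OF refl]) (simp add: take_take_le)
  qed
  finally show ?thesis by simp
qed

lemma spn_sp_nest: "(\<And>b c. G [] b c = 0) \<Longrightarrow> spn X (\<lambda>l c. sp l (\<lambda>a b. G a b c)) = sp X (\<lambda>l c. sp l (\<lambda>a b. G a b c))"
  by (simp add: sp_split[of X "\<lambda>l c. sp l (\<lambda>a b. G a b c)"])

lemma spn_spn_nest: "spn X (\<lambda>l c. spn l (\<lambda>a b. F a b c)) = sp X (\<lambda>l c. sp l (\<lambda>a b. if a = [] then 0 else F a b c))"
  by (simp only: spn_nest) (simp add: spn_sp)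

lemma nest4: "sp X (\<lambda>a r. sp r (\<lambda>e r. sp r (\<lambda>b r. sp r (\<lambda>c d. if a = [] then 0 else F a e b c d))))
  = spn X (\<lambda>l4 d. spn l4 (\<lambda>l3 c. spn l3 (\<lambda>l2 b. spn l2 (\<lambda>a e. F a e b c d))))"
  by (simp add: spn_spn_nest spn_sp_nest sp_assoc)

lemma nest4_sum: "spn X (\<lambda>l4 d. spn l4 (\<lambda>l3 c. spn l3 (\<lambda>l2 b. spn l2 (\<lambda>a e. F a e b c d))))
  = (\<Sum>q<length X. \<Sum>s\<le>q. \<Sum>j\<le>s. \<Sum>i\<le>j. F (take (i+1) X) (seg (i+1) (j+1) X) (seg (j+1) (s+1) X) (seg (s+1) (q+1) X) (drop (q+1) X))"
  unfolding spn_sum seg_def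
  by (intro sum.cong refl) (auto simp: lessThan_Suc_atMost[symmetric] take_take_le min_def)

lemma take_seg: "i \<le> j \<Longrightarrow> take i X @ seg i j X = take j X"
  unfolding seg_def by (metis append_take_drop_id take_take_le)
lemma seg_drop: "i \<le> j \<Longrightarrow> seg i j X @ drop j X = drop i X"
proof -
  assume "i \<le> j"
  then have "drop j X = drop (j-i) (drop i X)" by simp
  then show ?thesis unfolding seg_def drop_take by (metis append_take_drop_id)
qed

lemma nest2: "sp X (\<lambda>a r. sp r (\<lambda>e d. if a = [] then 0 else F a e d))
  = (\<Sum>j<length X. \<Sum>i\<le>j. F (take (i+1) X) (seg (i+1) (j+1) X) (drop (j+1) X))"
proof -
  have "sp X (\<lambda>a r. sp r (\<lambda>e d. if a = [] then 0 else F a e d)) = spn X (\<lambda>l d. spn l (\<lambda>a e. F a e d))"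
    by (simp add: spn_spn_nest sp_assoc)
  also have "\<dots> = (\<Sum>j<length X. \<Sum>i\<le>j. F (take (i+1) X) (seg (i+1) (j+1) X) (drop (j+1) X))"
    unfolding spn_sum seg_def
    by (intro sum.cong refl) (auto simp: lessThan_Suc_atMost[symmetric] take_take_le min_def)
  finally show ?thesis .
qed

lemma Lf_sp: "Lf \<phi> t X = sp X (\<lambda>p r. sp r (\<lambda>v w. if p = [] then 0 else sg (fst \<phi> * degs p) (t (p @ [app \<phi> v] @ w))))"
  unfolding nest2 Lf_def by simp

lemma rho_sp: "rho \<phi> \<psi> t X = sp X (\<lambda>a r. sp r (\<lambda>e r. sp r (\<lambda>b r. sp r (\<lambda>c d. if a = [] then 0 else
    sg (fst \<psi> * degs b + degs (a @ e) * degs (b @ c @ d)) (t (app \<phi> (b @ [app \<psi> c] @ d @ a) # e))))))"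
  unfolding nest4 nest4_sum rho_def
  apply (intro sum.cong refl)
  apply (simp add: take_seg seg_drop)
  done



lemma ml_add: "multilin f \<Longrightarrow> f (xs @ (d, a + b) # ys) = f (xs @ (d, a) # ys) + f (xs @ (d, b) # ys)"
  unfolding multilin_def by blast
lemma ml_0: "multilin f \<Longrightarrow> f (xs @ (d, 0) # ys) = 0"
  using ml_add[of f xs d 0 0 ys] by simp
lemma ml_neg: "multilin f \<Longrightarrow> f (xs @ (d, - a) # ys) = - f (xs @ (d, a) # ys)"
  using ml_add[of f xs d a "-a" ys] ml_0[of f xs d ys] by (simp add: eq_neg_iff_add_eq_0 add.commute)
lemma ml_diff: "multilin f \<Longrightarrow> f (xs @ (d, a - b) # ys) = f (xs @ (d, a) # ys) - f (xs @ (d, b) # ys)"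
  using ml_add[of f xs d a "-b" ys] ml_neg[of f xs d b ys] by simp
lemma ml_sg: "multilin f \<Longrightarrow> f (xs @ (d, sg n a) # ys) = sg n (f (xs @ (d, a) # ys))"
  by (simp add: sg_def ml_neg)
lemma ml_sum: "finite A \<Longrightarrow> multilin f \<Longrightarrow> f (xs @ (d, sum g A) # ys) = (\<Sum>i\<in>A. f (xs @ (d, g i) # ys))"
  by (induction A rule: finite_induct) (simp_all add: ml_0 ml_add)
lemma ml_sp: "multilin f \<Longrightarrow> f (xs @ (d, sp L F) # ys) = sp L (\<lambda>u v. f (xs @ (d, F u v) # ys))"
  unfolding sp_def by (simp add: ml_sum)

lemma ml_sp0: "multilin f \<Longrightarrow> f ((d, sp L F) # ys) = sp L (\<lambda>u v. f ((d, F u v) # ys))"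
  using ml_sp[of f "[]"] by simp
lemma ml_sg0: "multilin f \<Longrightarrow> f ((d, sg n a) # ys) = sg n (f ((d, a) # ys))"
  using ml_sg[of f "[]"] by simp

lemma app_gcomp_t: "multilin t \<Longrightarrow> t (app (gcomp \<phi> \<psi>) Y # e) =
   sp Y (\<lambda>u r. sp r (\<lambda>v w. sg (fst \<psi> * degs u) (t (app \<phi> (u @ [app \<psi> v] @ w) # e))))"
  unfolding app_def[of "gcomp \<phi> \<psi>"] gcomp_sp
  apply (simp add: ml_sp0 ml_sg0)
  apply (rule sp_cong)+
  apply (simp add: gcomp_def app_def algebra_simps)
  done

lemma sg_add: "sg n (x + y) = sg n x + sg n y" by (simp add: sg_def)
lemma sg_diff: "sg n (x - y) = sg n x - sg n y" by (simp add: sg_def)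
lemma sg_sp: "sg n (sp L F) = sp L (\<lambda>a b. sg n (F a b))"
  unfolding sp_def sg_def by (simp add: sum_negf)
lemma sg_sg: "sg m (sg n x) = sg (m + n) x" by (simp add: sg_def)
lemma sg_0[simp]: "sg n 0 = 0" by (simp add: sg_def)
lemma if_sp: "(if c then 0 else sp L F) = sp L (\<lambda>a b. if c then 0 else F a b)" by simp
lemma if_add: "(if c then 0 else x + y) = (if c then 0 else x) + (if c then (0::'a::monoid_add) else y)" by simp
lemma if_sg: "(if c then 0 else sg n x) = sg n (if c then 0 else x)" by simp


definition S7 :: "'a list \<Rightarrow> ('a list \<Rightarrow> 'a list \<Rightarrow> 'a list \<Rightarrow> 'a list \<Rightarrow> 'a list \<Rightarrow> 'a list \<Rightarrow> 'a list \<Rightarrow> 'b::comm_monoid_add) \<Rightarrow> 'b" where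
  "S7 X F = sp X (\<lambda>p1 r. sp r (\<lambda>p2 r. sp r (\<lambda>p3 r. sp r (\<lambda>p4 r. sp r (\<lambda>p5 r. sp r (\<lambda>p6 p7. F p1 p2 p3 p4 p5 p6 p7))))))"

lemma S7_spL: "S7 X F = spL 7 X (\<lambda>ps. F (ps!0) (ps!1) (ps!2) (ps!3) (ps!4) (ps!5) (ps!6))"
  by (simp add: S7_def numeral_eq_Suc)


lemma fst_gcomp[simp]: "fst (gcomp \<phi> \<psi>) = fst \<phi> + fst \<psi>" by (simp add: gcomp_def)
lemma fst_gbr[simp]: "fst (gbr \<phi> \<psi>) = fst \<phi> + fst \<psi>" by (simp add: gbr_def)
lemma fst_app[simp]: "fst (app \<phi> xs) = fst \<phi> + degs xs" by (simp add: app_def)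

lemma sh_5_2_3: "S7 X F = sp X (\<lambda>a r. sp r (\<lambda>e r. sp r (\<lambda>b r. sp r (\<lambda>c d. sp b (\<lambda>u r. sp r (\<lambda>v w. F a e u v w c d))))))"
  unfolding S7_spL spL_refine[of 2 5 X 2, symmetric, simplified]
  by (simp add: numeral_eq_Suc)
lemma sh_5_2_2_4_2: "S7 X F = sp X (\<lambda>a r. sp r (\<lambda>e r. sp r (\<lambda>b r. sp r (\<lambda>c d. sp b (\<lambda>u v1. sp d (\<lambda>v2 d2. F a e u v1 c v2 d2))))))"
  unfolding S7_spL spL_refine[of 5 6 X 1, symmetric, simplified] spL_refine[of 2 5 X 1, symmetric, simplified]
  by (simp add: numeral_eq_Suc)
lemma sh_5_2_2_0_2: "S7 X F = sp X (\<lambda>a r. sp r (\<lambda>e r. sp r (\<lambda>b r. sp r (\<lambda>c d. sp b (\<lambda>u v1. sp a (\<lambda>a1 a2. F a1 a2 e u v1 c d))))))"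
  unfolding S7_spL spL_refine[of 0 6 X 1, symmetric, simplified] spL_refine[of 2 5 X 1, symmetric, simplified]
  by (simp add: numeral_eq_Suc)
lemma sh_5_4_3: "S7 X F = sp X (\<lambda>a r. sp r (\<lambda>e r. sp r (\<lambda>b r. sp r (\<lambda>c d. sp d (\<lambda>d1 r. sp r (\<lambda>v d2. F a e b c d1 v d2))))))"
  unfolding S7_spL spL_refine[of 4 5 X 2, symmetric, simplified]
  by (simp add: numeral_eq_Suc)
lemma sh_5_4_2_0_2: "S7 X F = sp X (\<lambda>a r. sp r (\<lambda>e r. sp r (\<lambda>b r. sp r (\<lambda>c d. sp d (\<lambda>d1 d2. sp a (\<lambda>a1 a2. F a1 a2 e b c d1 d2))))))"
  unfolding S7_spL spL_refine[of 0 6 X 1, symmetric, simplified] spL_refine[of 4 5 X 1, symmetric, simplified]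
  by (simp add: numeral_eq_Suc)
lemma sh_5_0_3: "S7 X F = sp X (\<lambda>a r. sp r (\<lambda>e r. sp r (\<lambda>b r. sp r (\<lambda>c d. sp a (\<lambda>a1 r. sp r (\<lambda>v a2. F a1 v a2 e b c d))))))"
  unfolding S7_spL spL_refine[of 0 5 X 2, symmetric, simplified]
  by (simp add: numeral_eq_Suc)
lemma sh_5_3_3: "S7 X F = sp X (\<lambda>a r. sp r (\<lambda>e r. sp r (\<lambda>b r. sp r (\<lambda>c d. sp c (\<lambda>u r. sp r (\<lambda>v w. F a e b u v w d))))))"
  unfolding S7_spL spL_refine[of 3 5 X 2, symmetric, simplified]
  by (simp add: numeral_eq_Suc)
lemma sh_5_1_3: "S7 X F = sp X (\<lambda>a r. sp r (\<lambda>e r. sp r (\<lambda>b r. sp r (\<lambda>c d. sp e (\<lambda>p r. sp r (\<lambda>v w. F a p v w b c d))))))"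
  unfolding S7_spL spL_refine[of 1 5 X 2, symmetric, simplified]
  by (simp add: numeral_eq_Suc)
lemma sh_3_1_5: "S7 X F = sp X (\<lambda>a r. sp r (\<lambda>e d. sp e (\<lambda>a2 r. sp r (\<lambda>e' r. sp r (\<lambda>b r. sp r (\<lambda>c d'. F a a2 e' b c d' d))))))"
  unfolding S7_spL spL_refine[of 1 3 X 4, symmetric, simplified]
  by (simp add: numeral_eq_Suc)

lemma sh_3_0_5: "S7 X F = sp X (\<lambda>p r. sp r (\<lambda>v w. sp p (\<lambda>a r. sp r (\<lambda>e r. sp r (\<lambda>b r. sp r (\<lambda>c d1. F a e b c d1 v w))))))"
  unfolding S7_spL spL_refine[of 0 3 X 4, symmetric, simplified]
  by (simp add: numeral_eq_Suc)
lemma sh_3_0_4_2_2: "S7 X F = sp X (\<lambda>p r. sp r (\<lambda>v w. sp p (\<lambda>a r. sp r (\<lambda>e r. sp r (\<lambda>b c1. sp w (\<lambda>c2 d. F a e b c1 v c2 d))))))"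
  unfolding S7_spL spL_refine[of 5 6 X 1, symmetric, simplified] spL_refine[of 0 3 X 3, symmetric, simplified]
  by (simp add: numeral_eq_Suc)
lemma sh_3_0_3_2_3: "S7 X F = sp X (\<lambda>p r. sp r (\<lambda>v w. sp p (\<lambda>a r. sp r (\<lambda>e b1. sp w (\<lambda>b2 r. sp r (\<lambda>c d. F a e b1 v b2 c d))))))"
  unfolding S7_spL spL_refine[of 4 5 X 2, symmetric, simplified] spL_refine[of 0 3 X 2, symmetric, simplified]
  by (simp add: numeral_eq_Suc)
lemma sh_3_0_2_2_4: "S7 X F = sp X (\<lambda>p r. sp r (\<lambda>v w. sp p (\<lambda>a e1. sp w (\<lambda>e2 r. sp r (\<lambda>b r. sp r (\<lambda>c d. F a e1 v e2 b c d))))))"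
  unfolding S7_spL spL_refine[of 3 4 X 3, symmetric, simplified] spL_refine[of 0 3 X 1, symmetric, simplified]
  by (simp add: numeral_eq_Suc)
lemma sh_3_2_5: "S7 X F = sp X (\<lambda>p r. sp r (\<lambda>v w. sp w (\<lambda>a2 r. sp r (\<lambda>e r. sp r (\<lambda>b r. sp r (\<lambda>c d. F p v a2 e b c d))))))"
  unfolding S7_spL spL_refine[of 2 3 X 4, symmetric, simplified]
  by (simp add: numeral_eq_Suc)

lemma sp_diff: "sp X (\<lambda>a b. F a b - G a b) = sp X F - sp X (G::_\<Rightarrow>_\<Rightarrow>'b::ab_group_add)"
  by (simp add: sp_def sum_subtractf)

locale fam =
  fixes \<phi>1 \<phi>2 \<psi> :: "'m::ab_group_add coch" and t :: "'m hel list \<Rightarrow> 'c::ab_group_add"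
  assumes m1: "multilin (snd \<phi>1)" and m2: "multilin (snd \<phi>2)" and m3: "multilin (snd \<psi>)" and mt: "multilin t"
begin

abbreviation "f1 \<equiv> fst \<phi>1"
abbreviation "f2 \<equiv> fst \<phi>2"
abbreviation "g \<equiv> fst \<psi>"

definition "LAi a e u v w c d = sg (g*degs(u@v@w) + degs(a@e)*degs(u@v@w@c@d) + f2*degs u) (if a=[] then 0 else t (app \<phi>1 (u @ [app \<phi>2 v] @ w @ [app \<psi> c] @ d @ a) # e))"
definition "LAii a e u v1 c v2 d2 = sg (g*degs(u@v1) + degs(a@e)*degs(u@v1@c@v2@d2) + f2*degs u) (if a=[] then 0 else t (app \<phi>1 (u @ [app \<phi>2 (v1 @ [app \<psi> c] @ v2)] @ d2 @ a) # e))"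
definition "LAiii a1 a2 e u v1 c d = sg (g*degs(u@v1) + degs(a1@a2@e)*degs(u@v1@c@d) + f2*degs u) (if a1=[] then 0 else t (app \<phi>1 (u @ [app \<phi>2 (v1 @ [app \<psi> c] @ d @ a1)] @ a2) # e))"
definition "LAiv a e b c d1 v d2 = sg (g*degs b + degs(a@e)*degs(b@c@d1@v@d2) + f2*(degs b + (g + degs c) + degs d1)) (if a=[] then 0 else t (app \<phi>1 (b @ [app \<psi> c] @ d1 @ [app \<phi>2 v] @ d2 @ a) # e))"
definition "LAv a1 a2 e b c d1 d2 = sg (g*degs b + degs(a1@a2@e)*degs(b@c@d1@d2) + f2*(degs b + (g+degs c) + degs d1)) (if a1=[] then 0 else t (app \<phi>1 (b @ [app \<psi> c] @ d1 @ [app \<phi>2 (d2 @ a1)] @ a2) # e))"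
definition "LAvi a1 v a2 e b c d = sg (g*degs b + degs(a1@v@a2@e)*degs(b@c@d) + f2*(degs b + (g + degs c) + degs d + degs a1)) (if a1=[] then 0 else t (app \<phi>1 (b @ [app \<psi> c] @ d @ a1 @ [app \<phi>2 v] @ a2) # e))"

lemma A_exp: "rho (gcomp \<phi>1 \<phi>2) \<psi> t X = (S7 X LAi + (S7 X LAii + S7 X LAiii)) + ((S7 X LAiv + S7 X LAv) + S7 X LAvi)"
  unfolding sh_5_2_3[of X LAi] sh_5_2_2_4_2[of X LAii] sh_5_2_2_0_2[of X LAiii] sh_5_4_3[of X LAiv]
    sh_5_4_2_0_2[of X LAv] sh_5_0_3[of X LAvi]
  apply (simp add: rho_sp app_gcomp_t[OF mt] sp_append cong: if_cong)
  apply (simp add: spn_sp sp_add sg_sp sg_add if_sp if_add if_sg sg_sg cong: if_cong)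
  apply (intro arg_cong2[where f="(+)"] sp_cong)
  apply (simp_all add: LAi_def LAii_def LAiii_def LAiv_def LAv_def LAvi_def algebra_simps)
  done


definition "LB a e b u v w d = sg ((f2+g)*degs b + degs(a@e)*degs(b@u@v@w@d) + g*degs u) (if a=[] then 0 else t (app \<phi>1 (b @ [app \<phi>2 (u @ [app \<psi> v] @ w)] @ d @ a) # e))"
definition "LC a e b u v w d = sg ((g+f2)*degs b + degs(a@e)*degs(b@u@v@w@d) + f2*degs u) (if a=[] then 0 else t (app \<phi>1 (b @ [app \<psi> (u @ [app \<phi>2 v] @ w)] @ d @ a) # e))"
definition "LD1 a p v w b c d = sg (g*degs b + degs(a@p@v@w)*degs(b@c@d) + f2*((f1 + degs(b@[app \<psi> c]@d@a)) + degs p)) (if a = [] then 0 else t (app \<phi>1 (b @ [app \<psi> c] @ d @ a) # p @ [app \<phi>2 v] @ w))"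
definition "LR1 a a2 e' d' b c d = sg (g*degs b + degs(a@a2@e'@d')*degs(b@c@d) + (f2 + degs(b@[app \<psi> c]@d@a) + degs a2 + degs e')*degs d') (if a = [] then 0 else t (app \<phi>1 (d' @ [app \<phi>2 (b @ [app \<psi> c] @ d @ a)] @ a2) # e'))"
definition "LD2L0 a a2 e b c d' d = sg (degs(a@a2@e@b@c@d')*degs d + (g*degs b + (f2 + degs(d@a) + degs a2 + degs e)*degs(b@c@d'))) (if a = [] then 0 else t (app \<phi>1 (b @ [app \<psi> c] @ d' @ [app \<phi>2 (d @ a)] @ a2) # e))"
definition "LD2a a1 v a2 e b c d = sg (f2*degs a1 + (g*degs b + degs(a1@[app \<phi>2 v]@a2@e)*degs(b@c@d))) (if a1 = [] then 0 else t (app \<phi>1 (b @ [app \<psi> c] @ d @ a1 @ [app \<phi>2 v] @ a2) # e))"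
definition "LD2e a e1 v e2 b c d = sg (f2*degs(a@e1) + (g*degs b + degs(a@e1@[app \<phi>2 v]@e2)*degs(b@c@d))) (if a = [] then 0 else t (app \<phi>1 (b @ [app \<psi> c] @ d @ a) # e1 @ [app \<phi>2 v] @ e2))"
definition "LD2b a e b1 v b2 c d = sg (f2*degs(a@e@b1) + (g*degs(b1@[app \<phi>2 v]@b2) + degs(a@e)*degs(b1@[app \<phi>2 v]@b2@c@d))) (if a=[] then 0 else t (app \<phi>1 (b1 @ [app \<phi>2 v] @ b2 @ [app \<psi> c] @ d @ a) # e))"
definition "LD2c a e b c1 v c2 d = sg (f2*degs(a@e@b@c1) + (g*degs b + degs(a@e)*degs(b@c1@[app \<phi>2 v]@c2@d))) (if a=[] then 0 else t (app \<phi>1 (b @ [app \<psi> (c1 @ [app \<phi>2 v] @ c2)] @ d @ a) # e))"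
definition "LD2d a e b c d1 v d2 = sg (f2*degs(a@e@b@c@d1) + (g*degs b + degs(a@e)*degs(b@c@d1@[app \<phi>2 v]@d2))) (if a=[] then 0 else t (app \<phi>1 (b @ [app \<psi> c] @ d1 @ [app \<phi>2 v] @ d2 @ a) # e))"

lemma app_inner: "multilin (snd \<alpha>) \<Longrightarrow> t (app \<alpha> (b @ app (gcomp \<phi> \<psi>') c # rest) # e) = sp c (\<lambda>u r. sp r (\<lambda>v w. sg (fst \<psi>' * degs u) (t (app \<alpha> (b @ app \<phi> (u @ app \<psi>' v # w) # rest) # e))))"
  apply (simp add: app_def[of \<alpha>] app_def[of "gcomp \<phi> \<psi>'"] gcomp_sp ml_sp ml_sg ml_sp0[OF mt] ml_sg0[OF mt])
  apply (rule sp_cong)+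
  apply (simp add: gcomp_def app_def algebra_simps)
  done

lemma B_exp: "rho \<phi>1 (gcomp \<phi>2 \<psi>) t X = S7 X LB"
  unfolding sh_5_3_3[of X LB]
  apply (simp add: rho_sp app_inner[OF m1] cong: if_cong)
  apply (simp add: sp_add sg_sp sg_add if_sp if_add if_sg sg_sg cong: if_cong)
  apply (intro arg_cong2[where f="(+)"] sp_cong)
  apply (simp_all add: LB_def algebra_simps)
  done

lemma C_exp: "rho \<phi>1 (gcomp \<psi> \<phi>2) t X = S7 X LC"
  unfolding sh_5_3_3[of X LC]
  apply (simp add: rho_sp app_inner[OF m1] cong: if_cong)
  apply (simp add: sp_add sg_sp sg_add if_sp if_add if_sg sg_sg cong: if_cong)
  apply (intro arg_cong2[where f="(+)"] sp_cong)
  apply (simp_all add: LC_def algebra_simps)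
  done

lemma gbr_exp: "rho \<phi>1 (gbr \<phi>2 \<psi>) t X = rho \<phi>1 (gcomp \<phi>2 \<psi>) t X - sg (f2*g) (rho \<phi>1 (gcomp \<psi> \<phi>2) t X)"
  unfolding rho_sp sg_sp sp_diff[symmetric]
  apply (intro sp_cong)
  apply (simp add: app_def gbr_def ml_diff[OF m1] ml_sg[OF m1] ml_diff[OF mt, of "[]", simplified] ml_sg0[OF mt] sg_sg sg_diff algebra_simps)
  done

lemma D1_exp: "rho \<phi>1 \<psi> (Lf \<phi>2 t) X = S7 X LD1"
  unfolding sh_5_1_3[of X LD1]
  apply (simp add: rho_sp Lf_sp sp_Cons cong: if_cong)
  apply (simp add: sp_add sg_sp sg_add if_sp if_add if_sg sg_sg cong: if_cong)
  apply (intro arg_cong2[where f="(+)"] sp_cong)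
  apply (simp_all add: LD1_def algebra_simps)
  done

lemma R1_exp: "Top \<phi>1 \<phi>2 \<psi> t X = S7 X LR1"
  unfolding sh_5_1_3[of X LR1] Top_def ocomp_def
  apply (simp add: rho_sp L0_sp sp_Cons cong: if_cong)
  apply (simp add: sp_add sg_sp sg_add if_sp if_add if_sg sg_sg cong: if_cong)
  apply (intro arg_cong2[where f="(+)"] sp_cong)
  apply (simp_all add: LR1_def algebra_simps)
  done

lemma D2L0_exp: "L0 \<phi>2 (rho \<phi>1 \<psi> t) X = S7 X LD2L0"
  unfolding sh_3_1_5[of X LD2L0]
  apply (simp add: rho_sp L0_sp sp_Cons cong: if_cong)
  apply (simp add: sp_add sg_sp sg_add if_sp if_add if_sg sg_sg cong: if_cong)
  apply (intro arg_cong2[where f="(+)"] sp_cong)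
  apply (simp_all add: LD2L0_def algebra_simps)
  done

lemma D2L_exp: "Lf \<phi>2 (rho \<phi>1 \<psi> t) X = (((S7 X LD2d + S7 X LD2c) + S7 X LD2b) + S7 X LD2e) + S7 X LD2a"
  unfolding sh_3_0_5[of X LD2d] sh_3_0_4_2_2[of X LD2c] sh_3_0_3_2_3[of X LD2b] sh_3_0_2_2_4[of X LD2e] sh_3_2_5[of X LD2a]
  apply (simp add: Lf_sp rho_sp sp_append cong: if_cong)
  apply (simp add: spn_sp sp_add sg_sp sg_add if_sp if_add if_sg sg_sg cong: if_cong)
  apply (intro arg_cong2[where f="(+)"] sp_cong)
  apply (simp_all add: LD2a_def LD2b_def LD2c_def LD2d_def LD2e_def algebra_simps)
  done

lemma sg_eqI: "even (s1 + s2) \<Longrightarrow> sg s1 x = sg s2 x"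
  by (simp add: sg_def)

lemma P1: "S7 X LAii = S7 X LB"
  unfolding S7_def
  apply (intro sp_cong)
  apply (simp only: LAii_def LB_def)
  apply (rule sg_eqI)
  apply (simp add: even_add even_mult_iff)
  apply argo
  done

lemma P2: "S7 X LAiii = S7 X LR1"
  unfolding S7_def sg_sp
  apply (intro sp_cong)
  apply (simp only: LAiii_def LR1_def sg_sg)
  apply (rule sg_eqI)
  apply (simp add: even_add even_mult_iff)
  apply argo
  done

lemma P3: "S7 X LC = S7 X LD2c"
  unfolding S7_def sg_sp
  apply (intro sp_cong)
  apply (simp only: LC_def LD2c_def sg_sg)
  apply (rule sg_eqI)
  apply (simp add: even_add even_mult_iff)
  apply argo
  done

lemma P4: "sg (f1*f2) (S7 X LD1) = sg (f2*g) (S7 X LD2e)"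
  unfolding S7_def sg_sp
  apply (intro sp_cong)
  apply (simp only: LD1_def LD2e_def sg_sg)
  apply (rule sg_eqI)
  apply (simp add: even_add even_mult_iff)
  apply argo
  done

lemma P5: "S7 X LAi = sg (f2*g) (S7 X LD2b)"
  unfolding S7_def sg_sp
  apply (intro sp_cong)
  apply (simp only: LAi_def LD2b_def sg_sg)
  apply (rule sg_eqI)
  apply (simp add: even_add even_mult_iff)
  apply argo
  done

lemma P6: "S7 X LAiv = sg (f2*g) (S7 X LD2d)"
  unfolding S7_def sg_sp
  apply (intro sp_cong)
  apply (simp only: LAiv_def LD2d_def sg_sg)
  apply (rule sg_eqI)
  apply (simp add: even_add even_mult_iff)
  apply argo
  done

lemma P7: "S7 X LAvi = sg (f2*g) (S7 X LD2a)"
  unfolding S7_def sg_sp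
  apply (intro sp_cong)
  apply (simp only: LAvi_def LD2a_def sg_sg)
  apply (rule sg_eqI)
  apply (simp add: even_add even_mult_iff)
  apply argo
  done

lemma P8: "S7 X LAv = sg (f2*g) (S7 X LD2L0)"
  unfolding S7_def sg_sp
  apply (intro sp_cong)
  apply (simp only: LAv_def LD2L0_def sg_sg)
  apply (rule sg_eqI)
  apply (simp add: even_add even_mult_iff)
  apply argo
  done

lemma rho_add: "rho \<phi> \<psi>' (\<lambda>Z. T1 Z + T2 Z) X = rho \<phi> \<psi>' T1 X + rho \<phi> \<psi>' T2 X"
  unfolding rho_def by (simp add: sg_add sum.distrib)

lemma sgE: "sg (f1*f2 + f2*(f1+g)) x = sg (f2*g) x"
  by (rule sg_eqI) (simp add: even_add even_mult_iff, argo)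

lemma main: "rho (gcomp \<phi>1 \<phi>2) \<psi> t X - rho \<phi>1 (gbr \<phi>2 \<psi>) t X
           + sg (fst \<phi>1 * fst \<phi>2) (ocomm (fst \<phi>2) (fst \<phi>1 + fst \<psi>) (Lie \<phi>2) (rho \<phi>1 \<psi>) t X)
         = Top \<phi>1 \<phi>2 \<psi> t X + sg (fst \<phi>1 * fst \<phi>2) (Top \<phi>2 \<phi>1 \<psi> t X)"
proof -
  have lie: "Lie \<phi>2 T = (\<lambda>Z. Lf \<phi>2 T Z + L0 \<phi>2 T Z)" for T :: "'m hel list \<Rightarrow> 'c"
    by (rule ext) (rule Lie_Lf)
  have oc: "ocomm (fst \<phi>2) (fst \<phi>1 + fst \<psi>) (Lie \<phi>2) (rho \<phi>1 \<psi>) t X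
      = S7 X LD1 + Top \<phi>2 \<phi>1 \<psi> t X - sg (f2*(f1+g)) ((((S7 X LD2d + S7 X LD2c) + S7 X LD2b) + S7 X LD2e) + S7 X LD2a + S7 X LD2L0)"
    unfolding ocomm_def ocomp_def lie rho_add D1_exp Top_def
    using Lie_Lf[of \<phi>2 "rho \<phi>1 \<psi> t" X] D2L_exp D2L0_exp by simp
  show ?thesis
    unfolding oc A_exp gbr_exp B_exp C_exp R1_exp P1 P2 P3 P5 P6 P7 P8
    apply (simp only: sg_add sg_diff sg_sg sgE P4)
    apply (simp add: algebra_simps)
    done
qed

end

theorem mainTheorem14:
  fixes \<phi>1 \<phi>2 \<psi> :: "'m::ab_group_add coch"
    and t :: "'m hel list \<Rightarrow> 'c::ab_group_add"
    and X :: "'m hel list"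
  assumes "multilin (snd \<phi>1)" and "multilin (snd \<phi>2)" and "multilin (snd \<psi>)"
    and "multilin t"
  shows "rho (gcomp \<phi>1 \<phi>2) \<psi> t X - rho \<phi>1 (gbr \<phi>2 \<psi>) t X
           + sg (fst \<phi>1 * fst \<phi>2) (ocomm (fst \<phi>2) (fst \<phi>1 + fst \<psi>) (Lie \<phi>2) (rho \<phi>1 \<psi>) t X)
         = Top \<phi>1 \<phi>2 \<psi> t X + sg (fst \<phi>1 * fst \<phi>2) (Top \<phi>2 \<phi>1 \<psi> t X)"
proof -
  interpret fam \<phi>1 \<phi>2 \<psi> t using assms by unfold_locales
  show ?thesis by (rule main)
qed

end
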